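(* The class of finite tournaments has the Rank Property: for every countable ordinal $\alpha$ there is a countable tournament $X$ with $\mathsf{rk}(X)=\alpha$.
   Context: A tournament is a structure $(T,\to)$ with a binary relation $\to$ such that for any two distinct $u,v$ exactly one of $u\to v$, $v\to u$ holds (and no loops). Let $\mathcal F$ be the class of finite tournaments; countable tournaments are the structures considered. Substructures are induced sub-tournaments, $\mathsf{age}(X)$ is the set of finite sub-tournaments of $X$. For $A\le B$, $B$ is a prime extension of $A$ if $|B\setminus A|=1$; a realization of $B$ in $X$ (where $A\le X$) is $C\le X$ with $A\le C$ and an isomorphism $B\to C$ fixing $A$ pointwise. For $F\in\mathsf{age}(X)$ define by recursion: $\mathsf{rk}_X(F)\ge0$ always; $\mathsf{rk}_X(F)\ge\alpha+1$ iff every prime extension $B\in\mathcal F$ of $F$ has a realization $C$ in $X$ with $\mathsf{rk}_X(C)\ge\alpha$; for limit $\alpha$, $\mathsf{rk}_X(F)\ge\alpha$ iff $\mathsf{rk}_X(F)\ge\beta$ for all $\beta<\alpha$. $\mathsf{rk}_X(F)=\sup\{\alpha:\mathsf{rk}_X(F)\ge\alpha\}$ (or $\infty$ if this holds for all ordinals), and $\mathsf{rk}(X)=\mathsf{rk}_X(\emptyset)$. *)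

theory Defs
  imports Main "HOL-Library.Countable_Set"
begin

definition tournament :: "'v set \<Rightarrow> ('v \<Rightarrow> 'v \<Rightarrow> bool) \<Rightarrow> bool" where
  "tournament V E \<longleftrightarrow> (\<forall>v\<in>V. \<not> E v v) \<and>
     (\<forall>u\<in>V. \<forall>v\<in>V. u \<noteq> v \<longrightarrow> (E u v \<longleftrightarrow> \<not> E v u))"

text \<open>age(X): finite induced sub-tournaments, identified with their (finite) vertex sets.\<close>
definition in_age :: "'v set \<Rightarrow> 'v set \<Rightarrow> bool" where
  "in_age V F \<longleftrightarrow> finite F \<and> F \<subseteq> V"

text \<open>A prime extension B of the sub-tournament (F, E|F): a tournament EB on the vertex set
  Some ` F \<union> {None} (one new vertex None) which induces E on the copy Some ` F of F.\<close>
definition prime_ext :: "('v \<Rightarrow> 'v \<Rightarrow> bool) \<Rightarrow> 'v set \<Rightarrow> ('v option \<Rightarrow> 'v option \<Rightarrow> bool) \<Rightarrow> bool" where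
  "prime_ext E F EB \<longleftrightarrow> tournament (insert None (Some ` F)) EB \<and>
     (\<forall>a\<in>F. \<forall>b\<in>F. EB (Some a) (Some b) \<longleftrightarrow> E a b)"

definition realization :: "'v set \<Rightarrow> ('v \<Rightarrow> 'v \<Rightarrow> bool) \<Rightarrow> 'v set \<Rightarrow> ('v option \<Rightarrow> 'v option \<Rightarrow> bool) \<Rightarrow> 'v set \<Rightarrow> bool" where
  "realization V E F EB C \<longleftrightarrow> C \<subseteq> V \<and> F \<subseteq> C \<and>
     (\<exists>h. bij_betw h (insert None (Some ` F)) C \<and> (\<forall>a\<in>F. h (Some a) = a) \<and>
        (\<forall>x\<in>insert None (Some ` F). \<forall>y\<in>insert None (Some ` F). EB x y \<longleftrightarrow> E (h x) (h y)))"

text \<open>One step of the rank recursion along a well-order r. The point i of Field r stands for the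
  ordinal otype(underS r i). f j is the set of F in age(X) with rk_X(F) \<ge> (ordinal of j).\<close>
definition rk_step :: "'i rel \<Rightarrow> 'v set \<Rightarrow> ('v \<Rightarrow> 'v \<Rightarrow> bool) \<Rightarrow> ('i \<Rightarrow> 'v set set) \<Rightarrow> 'i \<Rightarrow> 'v set set" where
  "rk_step r V E f i =
     (if underS r i = {} then {F. in_age V F}
      else if (\<exists>p\<in>underS r i. \<forall>q\<in>underS r i. (q, p) \<in> r) then
        (let p = (THE p. p \<in> underS r i \<and> (\<forall>q\<in>underS r i. (q, p) \<in> r)) in
          {F. in_age V F \<and> (\<forall>EB. prime_ext E F EB \<longrightarrow> (\<exists>C. realization V E F EB C \<and> C \<in> f p))})
      else {F. in_age V F \<and> (\<forall>j\<in>underS r i. F \<in> f j)})"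

definition rk_ge :: "'i rel \<Rightarrow> 'v set \<Rightarrow> ('v \<Rightarrow> 'v \<Rightarrow> bool) \<Rightarrow> 'i \<Rightarrow> 'v set \<Rightarrow> bool" where
  "rk_ge r V E i F \<longleftrightarrow> F \<in> wfrec (r - Id) (rk_step r V E) i"

definition wo_succ :: "'i rel \<Rightarrow> 'i \<Rightarrow> 'i" where
  "wo_succ r i = (THE j. j \<in> aboveS r i \<and> (\<forall>k\<in>aboveS r i. (j, k) \<in> r))"

text \<open>rk(X) = otype(underS r i): rk_X(\<emptyset>) \<ge> that ordinal but not \<ge> its successor.\<close>
definition rank_eq :: "'i rel \<Rightarrow> 'v set \<Rightarrow> ('v \<Rightarrow> 'v \<Rightarrow> bool) \<Rightarrow> 'i \<Rightarrow> bool" where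
  "rank_eq r V E i \<longleftrightarrow> rk_ge r V E i {} \<and> \<not> rk_ge r V E (wo_succ r i) {}"

end

theory Submission
  imports Defs "HOL-Library.Sublist" "HOL-Library.List_Lexorder" "HOL-Library.Product_Lexorder"
begin

locale WO =
  fixes r :: "'i rel"
  assumes WO: "Well_order r"
begin

lemma lin: "Linear_order r" using WO by (simp add: well_order_on_def)
lemma refl: "x \<in> Field r \<Longrightarrow> (x,x) \<in> r"
  using lin unfolding linear_order_on_def partial_order_on_def preorder_on_def refl_on_def by blast
lemma trans: "(x,y) \<in> r \<Longrightarrow> (y,z) \<in> r \<Longrightarrow> (x,z) \<in> r"
  using lin unfolding linear_order_on_def partial_order_on_def preorder_on_def trans_def by blast
lemma antisym: "(x,y) \<in> r \<Longrightarrow> (y,x) \<in> r \<Longrightarrow> x = y"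
  using lin unfolding linear_order_on_def partial_order_on_def antisym_def by blast
lemma total: "x \<in> Field r \<Longrightarrow> y \<in> Field r \<Longrightarrow> (x,y) \<in> r \<or> (y,x) \<in> r"
proof -
  assume a: "x \<in> Field r" "y \<in> Field r"
  have "Total r" using lin by (simp add: linear_order_on_def)
  then show ?thesis using refl a unfolding total_on_def by metis
qed
lemma wf: "wf (r - Id)" using WO by (simp add: well_order_on_def)
lemma minimal: "A \<subseteq> Field r \<Longrightarrow> A \<noteq> {} \<Longrightarrow> \<exists>a\<in>A. \<forall>a'\<in>A. (a,a') \<in> r"
  using Linear_order_Well_order_iff[OF lin] WO by blast
lemma FieldI1: "(x,y) \<in> r \<Longrightarrow> x \<in> Field r" by (auto simp: Field_def)
lemma FieldI2: "(x,y) \<in> r \<Longrightarrow> y \<in> Field r" by (auto simp: Field_def)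

definition nx :: "'i \<Rightarrow> 'i" where "nx x = wo_succ r x"

lemma nx: assumes "aboveS r x \<noteq> {}"
  shows "nx x \<in> aboveS r x" "\<And>k. k \<in> aboveS r x \<Longrightarrow> (nx x, k) \<in> r"
proof -
  have sub: "aboveS r x \<subseteq> Field r" by (auto simp: aboveS_def Field_def)
  obtain m where m: "m \<in> aboveS r x" "\<forall>k\<in>aboveS r x. (m,k) \<in> r"
    using minimal[OF sub assms] by blast
  have "wo_succ r x = m" unfolding wo_succ_def
    by (rule the_equality) (use m antisym in blast)+
  then show "nx x \<in> aboveS r x" "\<And>k. k \<in> aboveS r x \<Longrightarrow> (nx x, k) \<in> r"
    using m by (auto simp: nx_def)
qed

lemma nx_gt: assumes "aboveS r x \<noteq> {}" shows "(x, nx x) \<in> r \<and> x \<noteq> nx x"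
  using nx(1)[OF assms] unfolding aboveS_def by auto

lemma nx_le: assumes "(x,y) \<in> r" "x \<noteq> y" shows "(nx x, y) \<in> r"
proof -
  have "y \<in> aboveS r x" using assms by (auto simp: aboveS_def)
  then show ?thesis using nx(2)[of x y] by blast
qed

lemma nx_field: "aboveS r x \<noteq> {} \<Longrightarrow> nx x \<in> Field r"
  using nx_gt FieldI2 by blast

lemma lt_nx_iff: assumes "aboveS r x \<noteq> {}" "x \<in> Field r"
  shows "((y, nx x) \<in> r \<and> y \<noteq> nx x) \<longleftrightarrow> (y, x) \<in> r"
proof
  assume a: "(y, nx x) \<in> r \<and> y \<noteq> nx x"
  show "(y,x) \<in> r"
  proof (rule ccontr)
    assume "(y,x) \<notin> r"
    moreover have "y \<in> Field r" using a FieldI1 by blast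
    ultimately have "(x,y) \<in> r" "x \<noteq> y" using total assms(2) refl by blast+
    then have "(nx x, y) \<in> r" by (rule nx_le)
    then show False using a antisym by blast
  qed
next
  assume "(y,x) \<in> r"
  then show "(y, nx x) \<in> r \<and> y \<noteq> nx x"
    using nx_gt[OF assms(1)] trans antisym by blast
qed

lemma underS_nx: "aboveS r x \<noteq> {} \<Longrightarrow> x \<in> Field r \<Longrightarrow> underS r (nx x) = insert x (underS r x)"
  using lt_nx_iff[of x] refl by (auto simp: underS_def)

lemma nx_mono: "(x,y) \<in> r \<Longrightarrow> aboveS r y \<noteq> {} \<Longrightarrow> (nx x, nx y) \<in> r"
  by (metis nx_gt nx_le trans)

lemma nx_strict: "(x,y) \<in> r \<Longrightarrow> x \<noteq> y \<Longrightarrow> aboveS r y \<noteq> {} \<Longrightarrow> (nx x, nx y) \<in> r \<and> nx x \<noteq> nx y"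
  by (metis antisym nx_gt nx_le trans)

lemma the_max: assumes "p \<in> underS r j" "\<forall>q\<in>underS r j. (q,p) \<in> r"
  shows "(THE p. p \<in> underS r j \<and> (\<forall>q\<in>underS r j. (q, p) \<in> r)) = p"
  by (rule the_equality) (use assms antisym in auto)

lemma cases_j:
  obtains (zero) "underS r j = {}"
  | (succ) p where "p \<in> underS r j" "\<forall>q\<in>underS r j. (q,p) \<in> r" "j = nx p" "aboveS r p \<noteq> {}" "p \<in> Field r"
  | (limit) "underS r j \<noteq> {}" "\<not> (\<exists>p\<in>underS r j. \<forall>q\<in>underS r j. (q,p) \<in> r)"
proof (cases "underS r j = {}")
  case True then show ?thesis using zero by blast
next
  case False
  show ?thesis
  proof (cases "\<exists>p\<in>underS r j. \<forall>q\<in>underS r j. (q,p) \<in> r")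
    case True
    then obtain p where p: "p \<in> underS r j" "\<forall>q\<in>underS r j. (q,p) \<in> r" by blast
    have ab: "aboveS r p \<noteq> {}" using p(1) by (auto simp: underS_def aboveS_def)
    have pf: "p \<in> Field r" using p(1) FieldI1 by (auto simp: underS_def)
    have "(nx p, j) \<in> r" using p(1) nx_le by (auto simp: underS_def)
    moreover have "nx p = j"
    proof (rule ccontr)
      assume "nx p \<noteq> j"
      then have "nx p \<in> underS r j" using calculation by (auto simp: underS_def)
      then have "(nx p, p) \<in> r" using p(2) by blast
      then show False using nx_gt[OF ab] antisym by blast
    qed
    ultimately show ?thesis using succ[of p] p ab pf by blast
  next
    case False2: False
    then show ?thesis using limit False by blast
  qed
qed

end

definition realizes :: "'v set \<Rightarrow> ('v \<Rightarrow> 'v \<Rightarrow> bool) \<Rightarrow> 'v set \<Rightarrow> ('v \<Rightarrow> bool) \<Rightarrow> 'v \<Rightarrow> bool" where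
  "realizes V E F S w \<longleftrightarrow> w \<in> V \<and> w \<notin> F \<and> (\<forall>x\<in>F. E w x = S x)"

lemma tourD1: "tournament V E \<Longrightarrow> v \<in> V \<Longrightarrow> \<not> E v v"
  unfolding tournament_def by blast
lemma tourD2: "tournament V E \<Longrightarrow> u \<in> V \<Longrightarrow> v \<in> V \<Longrightarrow> u \<noteq> v \<Longrightarrow> E u v = (\<not> E v u)"
  unfolding tournament_def by blast

lemma ext_char_1:
  assumes T: "tournament V E" and A: "in_age V F"
    and H: "\<forall>EB. prime_ext E F EB \<longrightarrow> (\<exists>C. realization V E F EB C \<and> P C)"
  shows "\<exists>w. realizes V E F S w \<and> P (insert w F)"
proof -
  define EB where "EB = (\<lambda>a b. case a of None \<Rightarrow> (case b of None \<Rightarrow> False | Some y \<Rightarrow> S y)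
       | Some x \<Rightarrow> (case b of None \<Rightarrow> \<not> S x | Some y \<Rightarrow> E x y))"
  have FV: "F \<subseteq> V" using A by (simp add: in_age_def)
  have t1: "\<not> EB v v" if "v \<in> insert None (Some ` F)" for v
  proof (cases v)
    case None then show ?thesis by (simp add: EB_def)
  next
    case (Some x) then have "x \<in> V" using that FV by auto
    then show ?thesis using Some tourD1[OF T] by (simp add: EB_def)
  qed
  have t2: "EB u v = (\<not> EB v u)" if "u \<in> insert None (Some ` F)" "v \<in> insert None (Some ` F)" "u \<noteq> v" for u v
  proof (cases u)
    case None note uN = this
    show ?thesis
    proof (cases v)
      case None then show ?thesis using uN that(3) by simp
    next
      case (Some y) then show ?thesis using uN by (simp add: EB_def)
    qed
  next
    case (Some x) note uS = this
    show ?thesis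
    proof (cases v)
      case None then show ?thesis using uS by (simp add: EB_def)
    next
      case (Some y)
      have xy: "x \<in> V" "y \<in> V" "x \<noteq> y" using that uS Some FV by auto
      have "E x y = (\<not> E y x)" by (rule tourD2[OF T xy])
      then show ?thesis using uS Some by (simp add: EB_def)
    qed
  qed
  have tt: "tournament (insert None (Some ` F)) EB"
    unfolding tournament_def
  proof (intro conjI ballI impI)
    fix v assume "v \<in> insert None (Some ` F)" then show "\<not> EB v v" by (rule t1)
  next
    fix u v assume "u \<in> insert None (Some ` F)" "v \<in> insert None (Some ` F)" "u \<noteq> v"
    then show "EB u v = (\<not> EB v u)" by (rule t2)
  qed
  have eb: "\<forall>a\<in>F. \<forall>b\<in>F. EB (Some a) (Some b) = E a b" by (simp add: EB_def)
  have "prime_ext E F EB"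
    unfolding prime_ext_def using tt eb by blast
  then obtain C where C: "realization V E F EB C" "P C" using H by blast
  then obtain h where h: "bij_betw h (insert None (Some ` F)) C" "\<forall>a\<in>F. h (Some a) = a"
    "\<forall>x\<in>insert None (Some ` F). \<forall>y\<in>insert None (Some ` F). EB x y = E (h x) (h y)"
    and CV: "C \<subseteq> V" unfolding realization_def by blast
  have "h ` (insert None (Some ` F)) = C" using h(1) by (simp add: bij_betw_def)
  moreover have "h ` (Some ` F) = F" using h(2) by (force simp: image_iff)
  ultimately have Ceq: "C = insert (h None) F" by (simp add: image_image)
  have inj: "inj_on h (insert None (Some ` F))" using h(1) by (simp add: bij_betw_def)
  have nF: "h None \<notin> F"
  proof
    assume hF: "h None \<in> F"
    then have "h (Some (h None)) = h None" using h(2) by simp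
    then have "Some (h None) = None" by (rule inj_onD[OF inj]) (use hF in auto)
    then show False by simp
  qed
  have "realizes V E F S (h None)"
    unfolding realizes_def
  proof (intro conjI ballI)
    show "h None \<in> V" using CV Ceq by auto
    show "h None \<notin> F" by (rule nF)
    fix x assume xF: "x \<in> F"
    have "EB None (Some x) = E (h None) (h (Some x))" using h(3) xF by blast
    then show "E (h None) x = S x" using h(2) xF by (simp add: EB_def)
  qed
  then show ?thesis using C(2) Ceq by blast
qed

lemma ext_char_2:
  assumes T: "tournament V E" and A: "in_age V F"
    and H: "\<forall>S. \<exists>w. realizes V E F S w \<and> P (insert w F)"
    and PE: "prime_ext E F EB"
  shows "\<exists>C. realization V E F EB C \<and> P C"
proof -
  obtain w where w: "realizes V E F (\<lambda>x. EB None (Some x)) w" "P (insert w F)" using H by blast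
  have FV: "F \<subseteq> V" using A by (simp add: in_age_def)
  define h where "h = (\<lambda>a. case a of None \<Rightarrow> w | Some x \<Rightarrow> x)"
  have wV: "w \<in> V" "w \<notin> F" "\<forall>x\<in>F. E w x = EB None (Some x)" using w(1) by (auto simp: realizes_def)
  have TB: "tournament (insert None (Some ` F)) EB" and EBF: "\<forall>a\<in>F. \<forall>b\<in>F. EB (Some a) (Some b) = E a b"
    using PE unfolding prime_ext_def by blast+
  have inj: "inj_on h (insert None (Some ` F))"
  proof (rule inj_onI)
    fix x y assume x: "x \<in> insert None (Some ` F)" and y: "y \<in> insert None (Some ` F)" and e: "h x = h y"
    show "x = y"
    proof (cases x)
      case None note xN = this
      show ?thesis
      proof (cases y)
        case None then show ?thesis using xN by simp
      next
        case (Some b) then have "b \<in> F" using y by auto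
        then show ?thesis using e xN Some wV(2) by (simp add: h_def)
      qed
    next
      case (Some a) note xS = this
      have aF: "a \<in> F" using x xS by auto
      show ?thesis
      proof (cases y)
        case None then show ?thesis using e xS aF wV(2) by (simp add: h_def)
      next
        case (Some b) then show ?thesis using e xS by (simp add: h_def)
      qed
    qed
  qed
  have img1: "h ` (Some ` F) = (\<lambda>x. h (Some x)) ` F" by (simp only: image_image)
  have img2: "(\<lambda>x. h (Some x)) ` F = F" by (simp add: h_def)
  have img: "h ` (insert None (Some ` F)) = insert w F"
    using img1 img2 by (simp add: h_def)
  have pres: "EB x y = E (h x) (h y)" if x: "x \<in> insert None (Some ` F)" and y: "y \<in> insert None (Some ` F)" for x y
  proof (cases x)
    case None note xN = this
    show ?thesis
    proof (cases y)
      case None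
      then show ?thesis using xN tourD1[OF TB, of None] tourD1[OF T wV(1)] by (simp add: h_def)
    next
      case (Some b)
      then have "b \<in> F" using y by auto
      then show ?thesis using xN Some wV(3) by (simp add: h_def)
    qed
  next
    case (Some a) note xS = this
    have aF: "a \<in> F" using x xS by auto
    show ?thesis
    proof (cases y)
      case None
      have "EB (Some a) None = (\<not> EB None (Some a))" using tourD2[OF TB, of "Some a" None] x xS by simp
      moreover have "E a w = (\<not> E w a)" using tourD2[OF T, of a w] FV aF wV by auto
      ultimately show ?thesis using xS None wV(3) aF by (simp add: h_def)
    next
      case (Some b)
      then have "b \<in> F" using y by auto
      then show ?thesis using xS Some EBF aF by (simp add: h_def)
    qed
  qed
  have "realization V E F EB (insert w F)"
    unfolding realization_def
  proof (intro conjI exI[of _ h])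
    show "insert w F \<subseteq> V" using FV wV by auto
    show "F \<subseteq> insert w F" by auto
    show "bij_betw h (insert None (Some ` F)) (insert w F)"
      unfolding bij_betw_def using inj img by blast
    show "\<forall>a\<in>F. h (Some a) = a" by (simp add: h_def)
    show "\<forall>x\<in>insert None (Some ` F). \<forall>y\<in>insert None (Some ` F). EB x y = E (h x) (h y)"
      using pres by blast
  qed
  then show ?thesis using w(2) by blast
qed

lemma ext_char:
  assumes T: "tournament V E" and A: "in_age V F"
  shows "(\<forall>EB. prime_ext E F EB \<longrightarrow> (\<exists>C. realization V E F EB C \<and> P C))
     \<longleftrightarrow> (\<forall>S. \<exists>w. realizes V E F S w \<and> P (insert w F))"
proof (intro iffI allI impI)
  fix S assume H: "\<forall>EB. prime_ext E F EB \<longrightarrow> (\<exists>C. realization V E F EB C \<and> P C)"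
  show "\<exists>w. realizes V E F S w \<and> P (insert w F)" by (rule ext_char_1[OF T A H])
next
  fix EB assume H: "\<forall>S. \<exists>w. realizes V E F S w \<and> P (insert w F)" and PE: "prime_ext E F EB"
  show "\<exists>C. realization V E F EB C \<and> P C" by (rule ext_char_2[OF T A H PE])
qed

locale RK = WO r for r :: "'i rel" +
  fixes V :: "'v set" and E :: "'v \<Rightarrow> 'v \<Rightarrow> bool"
  assumes T: "tournament V E"
begin

abbreviation rk where "rk j F \<equiv> rk_ge r V E j F"

lemma rk_step_zero: "underS r j = {} \<Longrightarrow> rk_step r V E f j = {F. in_age V F}"
  unfolding rk_step_def by simp

lemma rk_step_succ:
  assumes "p \<in> underS r j" "\<forall>q\<in>underS r j. (q,p) \<in> r"
  shows "rk_step r V E f j = {F. in_age V F \<and> (\<forall>EB. prime_ext E F EB \<longrightarrow> (\<exists>C. realization V E F EB C \<and> C \<in> f p))}"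
proof -
  have ne: "\<not> (underS r j = {})" using assms by blast
  have ex: "\<exists>p\<in>underS r j. \<forall>q\<in>underS r j. (q,p) \<in> r" using assms by blast
  have th: "(THE p. p \<in> underS r j \<and> (\<forall>q\<in>underS r j. (q, p) \<in> r)) = p" using the_max assms by blast
  show ?thesis unfolding rk_step_def
    by (subst if_not_P[OF ne], subst if_P[OF ex]) (simp only: Let_def th)
qed

lemma rk_step_limit:
  assumes "underS r j \<noteq> {}" "\<not> (\<exists>p\<in>underS r j. \<forall>q\<in>underS r j. (q,p) \<in> r)"
  shows "rk_step r V E f j = {F. in_age V F \<and> (\<forall>k\<in>underS r j. F \<in> f k)}"
  unfolding rk_step_def by (simp only: if_not_P[OF assms(1)] if_not_P[OF assms(2)])

lemma rk_step_cong:
  assumes "\<And>k. k \<in> underS r j \<Longrightarrow> f k = g k"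
  shows "rk_step r V E f j = rk_step r V E g j"
proof (cases j rule: cases_j)
  case zero then show ?thesis by (simp add: rk_step_zero)
next
  case (succ p)
  have "f p = g p" using assms succ(1) by blast
  then show ?thesis by (simp only: rk_step_succ[OF succ(1,2)])
next
  case limit then show ?thesis using assms by (simp add: rk_step_limit[OF limit])
qed

lemma unfold0: "rk j F \<longleftrightarrow> F \<in> rk_step r V E (\<lambda>k. wfrec (r - Id) (rk_step r V E) k) j"
proof -
  have "wfrec (r - Id) (rk_step r V E) j = rk_step r V E (cut (wfrec (r - Id) (rk_step r V E)) (r - Id) j) j"
    by (rule wfrec[OF wf])
  also have "\<dots> = rk_step r V E (\<lambda>k. wfrec (r - Id) (rk_step r V E) k) j"
    by (rule rk_step_cong) (auto simp: cut_def underS_def)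
  finally show ?thesis by (simp add: rk_ge_def)
qed

lemma unfold: "rk j F \<longleftrightarrow> F \<in> rk_step r V E (\<lambda>k. {G. rk k G}) j"
proof -
  have "(\<lambda>k. {G. rk k G}) = (\<lambda>k. wfrec (r - Id) (rk_step r V E) k)" by (auto simp: rk_ge_def)
  then show ?thesis using unfold0 by simp
qed

lemma rk_zero: "underS r j = {} \<Longrightarrow> rk j F \<longleftrightarrow> in_age V F"
  by (subst unfold) (simp add: rk_step_zero)

lemma rk_limit: assumes "underS r j \<noteq> {}" "\<not> (\<exists>p\<in>underS r j. \<forall>q\<in>underS r j. (q,p) \<in> r)"
  shows "rk j F \<longleftrightarrow> in_age V F \<and> (\<forall>k\<in>underS r j. rk k F)"
  by (subst unfold) (simp only: rk_step_limit[OF assms] mem_Collect_eq)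

lemma rk_succ_raw:
  assumes "p \<in> underS r j" "\<forall>q\<in>underS r j. (q,p) \<in> r"
  shows "rk j F \<longleftrightarrow> in_age V F \<and> (\<forall>EB. prime_ext E F EB \<longrightarrow> (\<exists>C. realization V E F EB C \<and> rk p C))"
  by (subst unfold) (simp only: rk_step_succ[OF assms] mem_Collect_eq)

lemma rk_age: assumes "rk j F" shows "in_age V F"
  using assms
proof (cases j rule: cases_j)
  case zero then show ?thesis using iffD1[OF rk_zero[OF zero] assms] by blast
next
  case (succ p) show ?thesis using iffD1[OF rk_succ_raw[OF succ(1,2)] assms] by (rule conjunct1)
next
  case limit show ?thesis using iffD1[OF rk_limit[OF limit] assms] by (rule conjunct1)
qed

lemma rk_succ:
  assumes "aboveS r p \<noteq> {}" "p \<in> Field r"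
  shows "rk (nx p) F \<longleftrightarrow> in_age V F \<and> (\<forall>S. \<exists>w. realizes V E F S w \<and> rk p (insert w F))"
proof -
  have u: "underS r (nx p) = insert p (underS r p)" by (rule underS_nx[OF assms])
  have p1: "p \<in> underS r (nx p)" using u by simp
  have p2: "\<forall>q\<in>underS r (nx p). (q,p) \<in> r" using u refl[OF assms(2)] by (auto simp: underS_def)
  have A: "rk (nx p) F \<longleftrightarrow> in_age V F \<and> (\<forall>EB. prime_ext E F EB \<longrightarrow> (\<exists>C. realization V E F EB C \<and> rk p C))"
    by (rule rk_succ_raw[OF p1 p2])
  show ?thesis
  proof (cases "in_age V F")
    case True then show ?thesis using A ext_char[OF T True, of "rk p"] by simp
  next
    case False then show ?thesis using A by simp
  qed
qed

lemma rk_mono_nx: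
  assumes "aboveS r p \<noteq> {}" "p \<in> Field r" "rk (nx p) F"
    and IH: "\<And>k G. (k,p) \<in> r \<Longrightarrow> rk p G \<Longrightarrow> rk k G"
    and IH2: "\<And>q G. q \<in> underS r p \<Longrightarrow> rk (nx q) G \<Longrightarrow> rk q G"
  shows "rk p F"
proof (cases p rule: cases_j)
  case zero
  then show ?thesis using rk_age[OF assms(3)] iffD2[OF rk_zero[OF zero]] by blast
next
  case (succ q)
  have A: "in_age V F" using rk_age[OF assms(3)] .
  have "\<forall>S. \<exists>w. realizes V E F S w \<and> rk q (insert w F)"
  proof
    fix S
    have "\<forall>S. \<exists>w. realizes V E F S w \<and> rk p (insert w F)" using iffD1[OF rk_succ[OF assms(1,2)] assms(3)] by blast
    then obtain w where "realizes V E F S w" "rk p (insert w F)" by blast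
    moreover have "(q,p) \<in> r" using succ(1) by (auto simp: underS_def)
    ultimately show "\<exists>w. realizes V E F S w \<and> rk q (insert w F)" using IH by blast
  qed
  then have "rk (nx q) F" using iffD2[OF rk_succ[OF succ(4,5)]] A by blast
  then show ?thesis using succ(3) by simp
next
  case limit
  have A: "in_age V F" using rk_age[OF assms(3)] .
  have "rk q F" if q: "q \<in> underS r p" for q
  proof -
    have "p \<in> aboveS r q" using q by (auto simp: underS_def aboveS_def)
    then have qa: "aboveS r q \<noteq> {}" "q \<in> Field r" using q FieldI1 by (auto simp: underS_def)
    have "rk (nx q) F"
    proof -
      have "\<forall>S. \<exists>w. realizes V E F S w \<and> rk q (insert w F)"
      proof
        fix S
        have "\<forall>S. \<exists>w. realizes V E F S w \<and> rk p (insert w F)" using iffD1[OF rk_succ[OF assms(1,2)] assms(3)] by blast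
    then obtain w where "realizes V E F S w" "rk p (insert w F)" by blast
        moreover have "(q,p) \<in> r" using q by (auto simp: underS_def)
        ultimately show "\<exists>w. realizes V E F S w \<and> rk q (insert w F)" using IH by blast
      qed
      then show ?thesis using iffD2[OF rk_succ[OF qa]] A by blast
    qed
    then show ?thesis using IH2[OF q] by blast
  qed
  then show ?thesis using iffD2[OF rk_limit[OF limit]] A by blast
qed

lemma rk_mono: "(k, j) \<in> r \<Longrightarrow> rk j F \<Longrightarrow> rk k F"
proof (induction j arbitrary: k F rule: wf_induct[OF wf])
  case (1 j)
  show ?case
  proof (cases "k = j")
    case True thus ?thesis using "1.prems"(2) by simp
  next
    case False
    hence kj: "k \<in> underS r j" using "1.prems"(1) by (auto simp: underS_def)
    show ?thesis
    proof (cases j rule: cases_j)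
      case zero then show ?thesis using kj by blast
    next
      case (succ p)
      have pj: "(p, j) \<in> r - Id" using succ(1) by (auto simp: underS_def)
      have IHp: "\<And>k' G. (k',p) \<in> r \<Longrightarrow> rk p G \<Longrightarrow> rk k' G" using "1.IH" pj by blast
      have IH2: "\<And>q G. q \<in> underS r p \<Longrightarrow> rk (nx q) G \<Longrightarrow> rk q G"
      proof -
        fix q G assume q: "q \<in> underS r p" and G: "rk (nx q) G"
        have "p \<in> aboveS r q" using q by (auto simp: underS_def aboveS_def)
    then have qa: "aboveS r q \<noteq> {}" "q \<in> Field r" using q FieldI1 by (auto simp: underS_def)
        have "(nx q, p) \<in> r" using q nx_le by (auto simp: underS_def)
        then have nqj: "(nx q, j) \<in> r" using pj trans[of "nx q" p j] by blast
        have "nx q \<noteq> j"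
        proof
          assume "nx q = j"
          then have "(j, p) \<in> r" using \<open>(nx q, p) \<in> r\<close> by simp
          then have "p = j" using pj antisym[of p j] by blast
          then show False using pj by blast
        qed
        then have "(nx q, j) \<in> r - Id" using nqj by blast
        moreover have "(q, nx q) \<in> r" using nx_gt[OF qa(1)] by blast
        ultimately show "rk q G" using "1.IH" G by blast
      qed
      have "rk (nx p) F" using "1.prems"(2) succ(3) by simp
      then have "rk p F" using rk_mono_nx[OF succ(4,5)] IHp IH2 by blast
      moreover have "(k, p) \<in> r" using kj succ(2) by blast
      ultimately show ?thesis using IHp by blast
    next
      case limit
      have "in_age V F \<and> (\<forall>k\<in>underS r j. rk k F)" using iffD1[OF rk_limit[OF limit] "1.prems"(2)] .
      then show ?thesis using kj by blast
    qed
  qed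
qed

end

primrec addn :: "'i rel \<Rightarrow> 'i \<Rightarrow> nat \<Rightarrow> 'i" where
  "addn r b 0 = b" | "addn r b (Suc n) = wo_succ r (addn r b n)"

declare addn.simps(2)[simp del]

context WO begin

abbreviation "add \<equiv> addn r"

lemma add_nx[simp]: "add b (Suc n) = nx (add b n)" by (simp add: nx_def addn.simps(2))

lemma add_add: "add (add b k) n = add b (k + n)"
  by (induction n) simp_all

lemma add_Suc_left: "add (nx b) n = add b (Suc n)"
  using add_add[of b 1 n] by simp

definition zr :: 'i where "zr = (THE z. z \<in> Field r \<and> (\<forall>x\<in>Field r. (z,x) \<in> r))"

lemma zr: assumes "Field r \<noteq> {}" shows "zr \<in> Field r" "\<And>x. x \<in> Field r \<Longrightarrow> (zr, x) \<in> r"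
proof -
  obtain m where m: "m \<in> Field r" "\<forall>x\<in>Field r. (m,x) \<in> r" using minimal[OF subset_refl assms] by blast
  have "zr = m" unfolding zr_def by (rule the_equality) (use m antisym in blast)+
  then show "zr \<in> Field r" "\<And>x. x \<in> Field r \<Longrightarrow> (zr, x) \<in> r" using m by auto
qed

end

locale WOi = WO r for r :: "'i rel" +
  fixes i :: 'i
  assumes iF: "i \<in> Field r" and iab: "aboveS r i \<noteq> {}"
begin

lemma FieldNE: "Field r \<noteq> {}" using iF by blast

lemma zrF: "zr \<in> Field r" using zr(1)[OF FieldNE] .
lemma zr_le: "x \<in> Field r \<Longrightarrow> (zr, x) \<in> r" using zr(2)[OF FieldNE] .
lemma underS_zr: "underS r zr = {}"
  using zr_le antisym FieldI1 by (auto simp: underS_def)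

lemma ab_le: assumes "(x, i) \<in> r" shows "aboveS r x \<noteq> {}"
proof -
  obtain k where k: "k \<in> aboveS r i" using iab by blast
  then have "(i,k) \<in> r" "k \<noteq> i" by (auto simp: aboveS_def)
  then have "(x,k) \<in> r" using assms trans by blast
  moreover have "k \<noteq> x"
  proof
    assume "k = x" then have "(i,x) \<in> r" using \<open>(i,k) \<in> r\<close> by simp
    then have "x = i" using assms antisym by blast
    then show False using \<open>k = x\<close> \<open>k \<noteq> i\<close> by simp
  qed
  ultimately have "k \<in> aboveS r x" by (auto simp: aboveS_def)
  then show ?thesis by blast
qed

lemma le_i_field: "(x, i) \<in> r \<Longrightarrow> x \<in> Field r" using FieldI1 by blast

definition H :: "'i \<Rightarrow> nat \<Rightarrow> bool" where "H c n \<longleftrightarrow> (\<forall>k\<le>n. (add c k, i) \<in> r)"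

lemma H_mono: "H c n \<Longrightarrow> m \<le> n \<Longrightarrow> H c m" by (auto simp: H_def)
lemma H_Suc: "H c (Suc n) \<Longrightarrow> H c n" by (auto simp: H_def)
lemma H_le: "H c n \<Longrightarrow> k \<le> n \<Longrightarrow> (add c k, i) \<in> r" by (auto simp: H_def)

lemma add_mono_le: "(b, c) \<in> r \<Longrightarrow> H c n \<Longrightarrow> (add b n, add c n) \<in> r \<and> H b n"
proof (induction n)
  case 0
  have "(c, i) \<in> r" using "0.prems"(2) by (auto simp: H_def)
  then have "(b, i) \<in> r" using "0.prems"(1) trans by blast
  then show ?case using "0.prems"(1) by (auto simp: H_def)
next
  case (Suc n)
  have Hn: "H c n" using H_Suc[OF Suc.prems(2)] .
  have IH: "(add b n, add c n) \<in> r" "H b n" using Suc.IH[OF Suc.prems(1) Hn] by auto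
  have ci: "(add c n, i) \<in> r" using H_le[OF Hn, of n] by simp
  have ab: "aboveS r (add c n) \<noteq> {}" using ab_le[OF ci] .
  have 1: "(add b (Suc n), add c (Suc n)) \<in> r" using nx_mono[OF IH(1) ab] by simp
  have "(add c (Suc n), i) \<in> r" using H_le[OF Suc.prems(2), of "Suc n"] by simp
  then have "(add b (Suc n), i) \<in> r" using 1 trans by blast
  then have "H b (Suc n)" using IH(2) by (auto simp: H_def le_Suc_eq)
  then show ?case using 1 by blast
qed

lemma add_mono_lt: "(b, c) \<in> r \<Longrightarrow> b \<noteq> c \<Longrightarrow> H c n \<Longrightarrow> (add b n, add c n) \<in> r \<and> add b n \<noteq> add c n"
proof (induction n)
  case 0 then show ?case by simp
next
  case (Suc n)
  have Hn: "H c n" using H_Suc[OF Suc.prems(3)] .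
  have IH: "(add b n, add c n) \<in> r" "add b n \<noteq> add c n" using Suc.IH[OF Suc.prems(1,2) Hn] by auto
  have ci: "(add c n, i) \<in> r" using H_le[OF Hn, of n] by simp
  have ab: "aboveS r (add c n) \<noteq> {}" using ab_le[OF ci] .
  show ?case using nx_strict[OF IH(1) IH(2) ab] by simp
qed

lemma add_lt_Suc: "(add c n, i) \<in> r \<Longrightarrow> (add c n, add c (Suc n)) \<in> r \<and> add c n \<noteq> add c (Suc n)"
  using nx_gt[OF ab_le] by simp

lemma add_mono_k: "H c n \<Longrightarrow> k \<le> n \<Longrightarrow> (add c k, add c n) \<in> r"
proof (induction n)
  case 0
  then have "(c, i) \<in> r" by (auto simp: H_def)
  then show ?case using 0 refl le_i_field by auto
next
  case (Suc n)
  show ?case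
  proof (cases "k = Suc n")
    case True
    have "(add c (Suc n), i) \<in> r" using H_le[OF Suc.prems(1), of "Suc n"] by blast
    then show ?thesis using True refl le_i_field by blast
  next
    case False
    then have "k \<le> n" using Suc.prems(2) by simp
    then have 1: "(add c k, add c n) \<in> r" using Suc.IH H_Suc[OF Suc.prems(1)] by blast
    have "(add c n, i) \<in> r" using H_le[OF Suc.prems(1)] by simp
    then have "(add c n, add c (Suc n)) \<in> r" using add_lt_Suc by blast
    then show ?thesis using 1 trans by blast
  qed
qed

lemma lt_le_lt: "(x, y) \<in> r \<Longrightarrow> (y, z) \<in> r \<Longrightarrow> y \<noteq> z \<Longrightarrow> (x, z) \<in> r \<and> x \<noteq> z"
  using trans antisym by blast

lemma le_lt_lt: "(x, y) \<in> r \<Longrightarrow> x \<noteq> y \<Longrightarrow> (y, z) \<in> r \<Longrightarrow> (x, z) \<in> r \<and> x \<noteq> z"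
  using trans antisym by blast

end

type_synonym ent = "int \<times> nat \<times> bool list"
type_synonym node = "ent list"

definition lab :: "ent \<Rightarrow> nat" where "lab e = fst (snd e)"
definition cod :: "ent \<Rightarrow> bool list" where "cod e = snd (snd e)"
definition label :: "node \<Rightarrow> nat" where "label t = lab (last t)"

definition valid :: "nat rel \<Rightarrow> nat \<Rightarrow> node \<Rightarrow> bool" where
  "valid r i t \<longleftrightarrow> t \<noteq> [] \<and>
     (\<forall>j<length t. (lab (t!j), i) \<in> r \<and> lab (t!j) \<noteq> i \<and> underS r (lab (t!j)) \<noteq> {} \<and> length (cod (t!j)) = j) \<and>
     (\<forall>j. Suc j < length t \<longrightarrow> (lab (t!Suc j), lab (t!j)) \<in> r \<and> lab (t!Suc j) \<noteq> lab (t!j))"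

definition Edge :: "node \<Rightarrow> node \<Rightarrow> bool" where
  "Edge x y = (if strict_prefix y x then cod (last x) ! (length y - 1)
     else if strict_prefix x y then \<not> cod (last y) ! (length x - 1)
     else x < y)"

definition pre :: "node \<Rightarrow> node set" where "pre t = {p. p \<noteq> [] \<and> prefix p t}"

lemma valid_prefix:
  assumes "valid r i t" "p \<noteq> []" "prefix p t"
  shows "valid r i p"
proof -
  have pt: "p = take (length p) t" using assms(3) by (metis append_eq_conv_conj prefix_def)
  have lp: "length p \<le> length t" using assms(3) prefix_length_le by blast
  have nth: "\<And>j. j < length p \<Longrightarrow> p ! j = t ! j" using pt by (metis nth_take)
  show ?thesis unfolding valid_def
  proof (intro conjI allI impI)
    show "p \<noteq> []" by (rule assms(2))
  next
    fix j assume j: "j < length p"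
    have "j < length t" using j lp by simp
    then show "(lab (p!j), i) \<in> r" "lab (p!j) \<noteq> i" "underS r (lab (p!j)) \<noteq> {}" "length (cod (p!j)) = j"
      using assms(1) nth[OF j] unfolding valid_def by auto
  next
    fix j assume j: "Suc j < length p"
    have "Suc j < length t" using j lp by simp
    then show "(lab (p!Suc j), lab (p!j)) \<in> r" "lab (p!Suc j) \<noteq> lab (p!j)"
      using assms(1) nth[OF j] nth[of j] j unfolding valid_def by auto
  qed
qed

lemma pre_eq: "pre t = (\<lambda>k. take k t) ` {1..length t}"
proof
  show "pre t \<subseteq> (\<lambda>k. take k t) ` {1..length t}"
  proof
    fix p assume "p \<in> pre t"
    then have p: "p \<noteq> []" "prefix p t" by (auto simp: pre_def)
    then have "p = take (length p) t" by (metis append_eq_conv_conj prefix_def)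
    moreover have "length p \<in> {1..length t}" using p prefix_length_le by (auto simp: Suc_le_eq)
    ultimately show "p \<in> (\<lambda>k. take k t) ` {1..length t}" by blast
  qed
next
  show "(\<lambda>k. take k t) ` {1..length t} \<subseteq> pre t"
    by (auto simp: pre_def take_is_prefix)
qed

lemma pre_finite: "finite (pre t)" by (simp add: pre_eq)

lemma pre_card: "card (pre t) = length t"
proof -
  have "inj_on (\<lambda>k. take k t) {1..length t}"
    by (rule inj_onI) (metis atLeastAtMost_iff length_take min.absorb2)
  then show ?thesis by (simp add: pre_eq card_image)
qed

lemma pre_self: "t \<noteq> [] \<Longrightarrow> t \<in> pre t" by (simp add: pre_def)

lemma pre_snoc: "pre (t @ [e]) = insert (t @ [e]) (pre t)"
proof
  show "pre (t @ [e]) \<subseteq> insert (t @ [e]) (pre t)"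
    by (auto simp: pre_def prefix_append prefix_Cons)
  show "insert (t @ [e]) (pre t) \<subseteq> pre (t @ [e])"
    by (auto simp: pre_def intro: prefix_prefix)
qed

lemma pre_valid: "valid r i t \<Longrightarrow> pre t \<subseteq> {t. valid r i t}"
  using valid_prefix by (auto simp: pre_def)

lemma lex_app: "(x :: node) < x @ b # z" by (induction x) auto

lemma lex_prefix: assumes "strict_prefix x y" shows "x < (y :: node)"
proof -
  obtain zs where zs: "y = x @ zs" "zs \<noteq> []" using assms by (auto simp: strict_prefix_def prefix_def)
  then obtain b z where "zs = b # z" by (cases zs) auto
  then show ?thesis using zs lex_app by simp
qed

lemma lex_branch: "a \<noteq> b \<Longrightarrow> ((p @ a # u :: node) < p @ b # w) \<longleftrightarrow> a < b"
  by (induction p) auto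

lemma tourn_Edge: "tournament {t. valid r i t} Edge"
  unfolding tournament_def
proof (intro conjI ballI impI)
  fix v show "\<not> Edge v v" by (simp add: Edge_def)
next
  fix u v :: node assume "u \<noteq> v"
  show "Edge u v = (\<not> Edge v u)"
  proof (cases rule: prefix_cases[of u v])
    case 1
    then have "strict_prefix u v" using \<open>u \<noteq> v\<close> by (simp add: strict_prefix_def)
    then have "\<not> strict_prefix v u" using prefix_order.less_asym by blast
    then show ?thesis using \<open>strict_prefix u v\<close> by (simp add: Edge_def)
  next
    case 2
    then have "\<not> strict_prefix u v" using prefix_order.less_asym by blast
    then show ?thesis using 2 by (simp add: Edge_def)
  next
    case 3
    then have "\<not> strict_prefix u v" "\<not> strict_prefix v u" by (auto simp: parallel_def strict_prefix_def)
    then show ?thesis using \<open>u \<noteq> v\<close> by (auto simp: Edge_def)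
  qed
qed

lemma E_par: "x \<parallel> y \<Longrightarrow> Edge x y = (x < y)"
  by (auto simp: Edge_def parallel_def strict_prefix_def)

lemma par_sym: "x \<parallel> y \<Longrightarrow> y \<parallel> x" by (auto simp: parallel_def)

lemma prefix_branch: "prefix x (p @ b # w') \<Longrightarrow> prefix x p \<or> (\<exists>x'. x = p @ b # x')"
proof -
  assume "prefix x (p @ b # w')"
  then have "prefix x p \<or> (\<exists>us. x = p @ us \<and> prefix us (b # w'))" by (simp add: prefix_append)
  then show ?thesis
  proof
    assume "\<exists>us. x = p @ us \<and> prefix us (b # w')"
    then obtain us where us: "x = p @ us" "prefix us (b # w')" by blast
    show ?thesis
    proof (cases us)
      case Nil then show ?thesis using us by simp
    next
      case (Cons c us')
      then have "c = b" using us(2) by simp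
      then show ?thesis using us Cons by blast
    qed
  qed simp
qed

lemma cycle_real:
  fixes u w x :: node
  assumes uw: "u \<parallel> w" "u < w" and xu: "x \<noteq> u" and xw: "x \<noteq> w"
    and e1: "Edge x u" and e2: "Edge w x"
  shows "strict_prefix x u \<and> strict_prefix x w"
proof -
  obtain p a u' b w' where dec: "a \<noteq> b" "u = p @ a # u'" "w = p @ b # w'"
    using parallel_decomp[OF uw(1)] by blast
  have ab: "a < b" using uw(2) dec lex_branch by simp
  have npuw: "\<not> prefix u w" "\<not> prefix w u" using uw(1) by (auto simp: parallel_def)
  show ?thesis
  proof (cases rule: prefix_cases[of x u])
    case 1
    then have sxu: "strict_prefix x u" using xu by (simp add: strict_prefix_def)
    show ?thesis
    proof (cases rule: prefix_cases[of x w])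
      case 1 then show ?thesis using sxu xw by (simp add: strict_prefix_def)
    next
      case 2
      then have "prefix w u" using sxu by (meson prefix_order.less_le_not_le prefix_order.order_trans)
      then show ?thesis using npuw by blast
    next
      case 3
      have "w < x" using e2 E_par[OF par_sym[OF 3]] by simp
      moreover have "x < u" using lex_prefix[OF sxu] .
      ultimately show ?thesis using uw(2) by simp
    qed
  next
    case 2
    show ?thesis
    proof (cases rule: prefix_cases[of x w])
      case 1
      then have "prefix u w" using 2 by (meson prefix_order.less_le_not_le prefix_order.order_trans)
      then show ?thesis using npuw by blast
    next
      case c2: 2
      have "prefix u x" "prefix w x" using 2 c2 by (auto simp: strict_prefix_def)
      then have "prefix u w \<or> prefix w u" using prefix_same_cases by blast
      then show ?thesis using npuw by blast
    next
      case 3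
      have "w < x" using e2 E_par[OF par_sym[OF 3]] by simp
      obtain y where "x = u @ y" using 2 by (auto simp: strict_prefix_def prefix_def)
      then have "x = p @ a # (u' @ y)" using dec by simp
      then have "x < w" using dec(3) lex_branch[OF dec(1)] ab by simp
      then show ?thesis using \<open>w < x\<close> by simp
    qed
  next
    case 3
    have "x < u" using e1 E_par[OF 3] by simp
    show ?thesis
    proof (cases rule: prefix_cases[of x w])
      case 1
      then have "prefix x p \<or> (\<exists>x'. x = p @ b # x')" using dec(3) prefix_branch by simp
      then show ?thesis
      proof
        assume "prefix x p"
        then have "prefix x u" using dec(2) by (simp add: prefix_append)
        then show ?thesis using 3 by (auto simp: parallel_def)
      next
        assume "\<exists>x'. x = p @ b # x'"
        then obtain x' where "x = p @ b # x'" by blast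
        then have "u < x" using dec(2) lex_branch[OF dec(1)] ab by simp
        then show ?thesis using \<open>x < u\<close> by simp
      qed
    next
      case 2
      obtain y where "x = w @ y" using 2 by (auto simp: strict_prefix_def prefix_def)
      then have "x = p @ b # (w' @ y)" using dec by simp
      then have "u < x" using dec(2) lex_branch[OF dec(1)] ab by simp
      then show ?thesis using \<open>x < u\<close> by simp
    next
      case c3: 3
      have "w < x" using e2 E_par[OF par_sym[OF c3]] by simp
      then show ?thesis using \<open>x < u\<close> uw(2) by simp
    qed
  qed
qed

definition CA :: "node \<Rightarrow> node \<Rightarrow> node set" where
  "CA u w = {x. x \<noteq> [] \<and> strict_prefix x u \<and> strict_prefix x w}"

lemma CA_sub: "CA u w \<subseteq> pre u" by (auto simp: CA_def pre_def strict_prefix_def)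
lemma CA_finite: "finite (CA u w)" using finite_subset[OF CA_sub pre_finite] .
lemma CA_sym: "CA u w = CA w u" by (auto simp: CA_def)

locale TR = WOi r i for r :: "nat rel" and i :: nat
begin

sublocale G: RK r "{t. valid r i t}" Edge
  by unfold_locales (rule tourn_Edge)

lemma vnth:
  assumes "valid r i t" "j < length t"
  shows "(lab (t!j), i) \<in> r" "lab (t!j) \<noteq> i" "underS r (lab (t!j)) \<noteq> {}" "length (cod (t!j)) = j"
  using assms unfolding valid_def by auto

lemma vdec:
  assumes "valid r i t" "Suc j < length t"
  shows "(lab (t!Suc j), lab (t!j)) \<in> r" "lab (t!Suc j) \<noteq> lab (t!j)"
  using assms unfolding valid_def by auto

lemma label_nth: "t \<noteq> [] \<Longrightarrow> label t = lab (t ! (length t - 1))"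
  by (simp add: label_def last_conv_nth)

lemma chain_add:
  assumes v: "valid r i t" and m: "m < length t"
  shows "(add (label t) m, lab (t ! (length t - 1 - m))) \<in> r"
  using m
proof (induction m)
  case 0
  have ne: "t \<noteq> []" using v by (simp add: valid_def)
  have "(label t, i) \<in> r" using vnth(1)[OF v, of "length t - 1"] ne label_nth[OF ne] by simp
  then have "label t \<in> Field r" using le_i_field by blast
  then show ?case using refl label_nth[OF ne] by simp
next
  case (Suc m)
  define k where "k = length t - 1 - m"
  have k1: "k \<ge> 1" "k < length t" using Suc.prems by (auto simp: k_def)
  have IH: "(add (label t) m, lab (t ! k)) \<in> r" using Suc.IH Suc.prems by (simp add: k_def)
  have kk: "Suc (k - 1) = k" using k1 by simp
  have d: "(lab (t!k), lab (t!(k-1))) \<in> r" "lab (t!k) \<noteq> lab (t!(k-1))"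
    using vdec[OF v, of "k - 1"] k1 kk by auto
  have "(add (label t) m, lab (t!(k-1))) \<in> r \<and> add (label t) m \<noteq> lab (t!(k-1))"
    using le_lt_lt[OF IH] d lt_le_lt[OF IH d(1) d(2)] by blast
  then have "(nx (add (label t) m), lab (t!(k-1))) \<in> r" using nx_le by blast
  moreover have "length t - 1 - Suc m = k - 1" by (simp add: k_def)
  ultimately show ?case by simp
qed

lemma label_lt_i: assumes "valid r i t" shows "(label t, i) \<in> r" "label t \<noteq> i" "underS r (label t) \<noteq> {}"
proof -
  have ne: "t \<noteq> []" using assms by (simp add: valid_def)
  show "(label t, i) \<in> r" "label t \<noteq> i" "underS r (label t) \<noteq> {}"
    using vnth[OF assms, of "length t - 1"] ne label_nth[OF ne] by auto
qed

lemma add_label_lt_i: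
  assumes v: "valid r i t" and m: "m < length t"
  shows "(add (label t) m, i) \<in> r \<and> add (label t) m \<noteq> i"
proof -
  have "length t - 1 - m < length t" using m by simp
  then have "(lab (t ! (length t - 1 - m)), i) \<in> r" "lab (t ! (length t - 1 - m)) \<noteq> i"
    using vnth[OF v] by auto
  then show ?thesis using lt_le_lt[OF chain_add[OF v m]] by blast
qed

lemma H_label: "valid r i t \<Longrightarrow> n < length t \<Longrightarrow> H (label t) n"
  unfolding H_def using add_label_lt_i by auto

end

context TR begin

lemma valid_ne: "valid r i t \<Longrightarrow> t \<noteq> []" by (simp add: valid_def)

lemma UB_nonchain:
  "finite G \<Longrightarrow> G \<subseteq> {t. valid r i t} \<Longrightarrow> u \<in> G \<Longrightarrow> w \<in> G \<Longrightarrow> u \<parallel> w \<Longrightarrow> u < w \<Longrightarrow>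
   card (CA u w - G) = m \<Longrightarrow> H zr m \<Longrightarrow> \<not> G.rk (add zr (Suc m)) G"
proof (induction m arbitrary: G)
  case (0 G)
  note prems = "0.prems"
  show ?case
  proof
    assume rk: "G.rk (add zr (Suc 0)) G"
    have pi: "(add zr 0, i) \<in> r" using H_le[OF prems(8), of 0] by simp
    have ab: "aboveS r (add zr 0) \<noteq> {}" "add zr 0 \<in> Field r" using ab_le[OF pi] le_i_field[OF pi] by auto
    have "G.rk (nx (add zr 0)) G" using rk by simp
    then have "\<forall>S. \<exists>x. realizes {t. valid r i t} Edge G S x \<and> G.rk (add zr 0) (insert x G)"
      using iffD1[OF G.rk_succ[OF ab]] by blast
    then obtain x where x: "realizes {t. valid r i t} Edge G (\<lambda>y. y = u) x" by blast
    then have xv: "valid r i x" "x \<notin> G" "\<forall>y\<in>G. Edge x y = (y = u)" by (auto simp: realizes_def)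
    have xu: "x \<noteq> u" "x \<noteq> w" using xv(2) prems(3,4) by auto
    have uw: "u \<noteq> w" using prems(5) by (auto simp: parallel_def)
    have e1: "Edge x u" using xv(3) prems(3) by simp
    have "\<not> Edge x w" using xv(3) prems(4) uw by auto
    moreover have "valid r i w" using prems(2,4) by auto
    ultimately have e2: "Edge w x" using tourD2[OF G.T, of w x] xv(1) xu(2) by auto
    have "strict_prefix x u \<and> strict_prefix x w" using cycle_real[OF prems(5,6) xu e1 e2] .
    then have "x \<in> CA u w - G" using xv(2) valid_ne[OF xv(1)] by (auto simp: CA_def)
    moreover have "CA u w - G = {}" using prems(7) CA_finite by simp
    ultimately show False by blast
  qed
next
  case (Suc m G)
  note prems = Suc.prems
  show ?case
  proof
    assume rk: "G.rk (add zr (Suc (Suc m))) G"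
    have pi: "(add zr (Suc m), i) \<in> r" using H_le[OF prems(8), of "Suc m"] by simp
    have ab: "aboveS r (add zr (Suc m)) \<noteq> {}" "add zr (Suc m) \<in> Field r" using ab_le[OF pi] le_i_field[OF pi] by auto
    have "G.rk (nx (add zr (Suc m))) G" using rk by simp
    then have "\<forall>S. \<exists>x. realizes {t. valid r i t} Edge G S x \<and> G.rk (add zr (Suc m)) (insert x G)"
      using iffD1[OF G.rk_succ[OF ab]] by blast
    then obtain x where x: "realizes {t. valid r i t} Edge G (\<lambda>y. y = u) x"
      and rkx: "G.rk (add zr (Suc m)) (insert x G)" by blast
    then have xv: "valid r i x" "x \<notin> G" "\<forall>y\<in>G. Edge x y = (y = u)" by (auto simp: realizes_def)
    have xu: "x \<noteq> u" "x \<noteq> w" using xv(2) prems(3,4) by auto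
    have uw: "u \<noteq> w" using prems(5) by (auto simp: parallel_def)
    have e1: "Edge x u" using xv(3) prems(3) by simp
    have "\<not> Edge x w" using xv(3) prems(4) uw by auto
    moreover have "valid r i w" using prems(2,4) by auto
    ultimately have e2: "Edge w x" using tourD2[OF G.T, of w x] xv(1) xu(2) by auto
    have "strict_prefix x u \<and> strict_prefix x w" using cycle_real[OF prems(5,6) xu e1 e2] .
    then have xc: "x \<in> CA u w - G" using xv(2) valid_ne[OF xv(1)] by (auto simp: CA_def)
    have "CA u w - insert x G = (CA u w - G) - {x}" by blast
    then have c: "card (CA u w - insert x G) = m"
      using prems(7) xc CA_finite by (simp add: card_Diff_singleton)
    have "\<not> G.rk (add zr (Suc m)) (insert x G)"
      using Suc.IH[of "insert x G"] prems xv(1) c H_Suc[OF prems(8)] by auto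
    then show False using rkx by blast
  qed
qed

end

context TR begin

lemma pre_sub_valid: "valid r i t \<Longrightarrow> pre t \<subseteq> {t. valid r i t}" using pre_valid .

lemma UB_chain:
  "valid r i t \<Longrightarrow> t \<in> F \<Longrightarrow> F \<subseteq> pre t \<Longrightarrow> v = add (label t) (length t - card F) \<Longrightarrow> \<not> G.rk (nx v) F"
proof (induction v arbitrary: t F rule: wf_induct[OF wf])
  case (1 v t F)
  note vt = "1.prems"(1) and tF = "1.prems"(2) and Fs = "1.prems"(3) and veq = "1.prems"(4)
  have fin: "finite F" using finite_subset[OF Fs pre_finite] .
  have "F \<noteq> {}" using tF by blast
  then have "card F \<noteq> 0" using fin by simp
  then have c1: "card F \<ge> 1" by simp
  have IH: "\<not> G.rk (nx y) F'"
    if "(y, v) \<in> r - Id" "valid r i t'" "t' \<in> F'" "F' \<subseteq> pre t'" "y = add (label t') (length t' - card F')" for y t' F'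
    using "1.IH"[rule_format, OF that] .
  have c2: "card F \<le> length t" using card_mono[OF pre_finite Fs] pre_card by simp
  define n where "n = length t - card F"
  have nlt: "n < length t" using c1 c2 by (simp add: n_def)
  have Hn: "H (label t) n" using H_label[OF vt nlt] .
  have vi: "(v, i) \<in> r" "v \<noteq> i" using add_label_lt_i[OF vt nlt] veq n_def by auto
  have ab: "aboveS r v \<noteq> {}" "v \<in> Field r" using ab_le[OF vi(1)] le_i_field[OF vi(1)] by auto
  show ?case
  proof
    assume rk: "G.rk (nx v) F"
    have "\<forall>S. \<exists>x. realizes {t. valid r i t} Edge F S x \<and> G.rk v (insert x F)"
      using iffD1[OF G.rk_succ[OF ab] rk] by blast
    then obtain x where x: "realizes {t. valid r i t} Edge F (\<lambda>_. False) x"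
      and rkx: "G.rk v (insert x F)" by blast
    then have xv: "valid r i x" "x \<notin> F" by (auto simp: realizes_def)
    have xt: "x \<noteq> t" using xv(2) tF by auto
    have xne: "x \<noteq> []" using valid_ne[OF xv(1)] .
    have finx: "finite (insert x F)" using fin by simp
    have cx: "card (insert x F) = Suc (card F)" using fin xv(2) by simp
    consider (a) "strict_prefix x t" | (b) "strict_prefix t x" | (c) "x \<parallel> t"
      using prefix_cases[of x t] xt by (auto simp: strict_prefix_def)
    then show False
    proof cases
      case a
      have xpre: "x \<in> pre t" using a xne by (auto simp: pre_def strict_prefix_def)
      have F's: "insert x F \<subseteq> pre t" using xpre Fs by blast
      have "card (insert x F) \<le> length t" using card_mono[OF pre_finite F's] pre_card by simp
      then obtain n' where n': "n = Suc n'" "n' = length t - card (insert x F)"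
        using cx by (simp add: n_def)
      have vv: "v = nx (add (label t) n')" using veq n' by (simp add: n_def)
      have "(add (label t) n', i) \<in> r" using H_le[OF Hn, of n'] n' by simp
      then have lt: "(add (label t) n', v) \<in> r - Id" using add_lt_Suc[of "label t" n'] vv by auto
      have "\<not> G.rk (nx (add (label t) n')) (insert x F)"
        by (rule IH[OF lt vt _ F's]) (use n'(2) tF in simp_all)
      then show False using rkx vv by simp
    next
      case b
      have pxx: "x \<in> pre x" using xne by (simp add: pre_def)
      have ptx: "pre t \<subseteq> pre x" using b by (auto simp: pre_def strict_prefix_def intro: prefix_order.order_trans)
      have F's: "insert x F \<subseteq> pre x" using pxx ptx Fs by blast
      define d where "d = length t"
      define e where "e = length x"
      have de: "d < e" using b by (simp add: d_def e_def strict_prefix_def prefix_length_less)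
      define k where "k = e - d - 1"
      have cF: "card F \<le> d" using c2 by (simp add: d_def)
      have n'eq: "length x - card (insert x F) = k + n" using cx cF de c1 by (simp add: k_def n_def d_def e_def)
      have tx: "t = take d x" using b by (auto simp: strict_prefix_def prefix_def d_def)
      have d1: "d \<ge> 1" using c1 cF by simp
      have "Suc k < length x" using de d1 by (simp add: k_def e_def)
      then have ca: "(add (label x) (Suc k), lab (x ! (length x - 1 - Suc k))) \<in> r" using chain_add[OF xv(1)] by blast
      have idx: "length x - 1 - Suc k = d - 1" using de d1 by (simp add: k_def e_def)
      have "take d x ! (d - 1) = x ! (d - 1)" using d1 by simp
      then have "x ! (d - 1) = t ! (d - 1)" using tx by simp
      then have "lab (x ! (length x - 1 - Suc k)) = label t"
        using idx label_nth[OF valid_ne[OF vt]] by (simp add: d_def)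
      then have ca': "(add (label x) (Suc k), label t) \<in> r" using ca by simp
      have "k < length x" using de by (simp add: k_def e_def)
      then have "(add (label x) k, i) \<in> r" using add_label_lt_i[OF xv(1)] by blast
      then have "(add (label x) k, add (label x) (Suc k)) \<in> r \<and> add (label x) k \<noteq> add (label x) (Suc k)"
        by (rule add_lt_Suc)
      then have klt: "(add (label x) k, label t) \<in> r \<and> add (label x) k \<noteq> label t"
        using le_lt_lt ca' by blast
      have "(add (add (label x) k) n, add (label t) n) \<in> r \<and> add (add (label x) k) n \<noteq> add (label t) n"
        using add_mono_lt[OF _ _ Hn] klt by blast
      then have lt: "(add (label x) (k + n), v) \<in> r \<and> add (label x) (k + n) \<noteq> v"
        using add_add veq by (simp add: n_def)
      then have lt': "(add (label x) (k + n), v) \<in> r - Id" by blast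
      have "\<not> G.rk (nx (add (label x) (k + n))) (insert x F)"
        by (rule IH[OF lt' xv(1) _ F's]) (use n'eq in simp_all)
      moreover have "(nx (add (label x) (k + n)), v) \<in> r" using nx_le lt by blast
      ultimately show False using G.rk_mono rkx by blast
    next
      case c
      define u where "u = (if t < x then t else x)"
      define w where "w = (if t < x then x else t)"
      have uw: "u \<parallel> w" "u < w" using c xt by (auto simp: u_def w_def parallel_def neq_iff)
      have uwG: "u \<in> insert x F" "w \<in> insert x F" using tF by (auto simp: u_def w_def)
      have CAeq: "CA u w = CA t x" using CA_sym by (auto simp: u_def w_def)
      have "CA t x - insert x F \<subseteq> pre t - F" by (auto simp: CA_def pre_def strict_prefix_def)
      then have "card (CA u w - insert x F) \<le> card (pre t - F)"
        using CAeq by (simp add: card_mono finite_Diff pre_finite)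
      also have "\<dots> = n" using card_Diff_subset[OF fin Fs] pre_card by (simp add: n_def)
      finally have mn: "card (CA u w - insert x F) \<le> n" .
      define m where "m = card (CA u w - insert x F)"
      have lF: "label t \<in> Field r" using label_lt_i(1)[OF vt] le_i_field by blast
      have lz: "label t \<noteq> zr" using label_lt_i(3)[OF vt] underS_zr by auto
      have "(zr, label t) \<in> r" using zr_le[OF lF] .
      moreover have "zr \<noteq> label t" using lz by simp
      ultimately have "(nx zr, label t) \<in> r" using nx_le by blast
      then have am: "(add (nx zr) n, add (label t) n) \<in> r \<and> H (nx zr) n" using add_mono_le[OF _ Hn] by blast
      have HS: "H zr (Suc n)"
        unfolding H_def
      proof (intro allI impI)
        fix k assume k: "k \<le> Suc n"
        show "(add zr k, i) \<in> r"
        proof (cases k)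
          case 0 then show ?thesis using zr_le[OF iF] by simp
        next
          case (Suc k')
          then have "(add (nx zr) k', i) \<in> r" using am k H_le by auto
          then show ?thesis using Suc add_Suc_left by simp
        qed
      qed
      have Hm: "H zr m" using H_mono[OF HS] mn m_def by simp
      have "(add zr (Suc m), add zr (Suc n)) \<in> r" by (rule add_mono_k[OF HS]) (use mn m_def in simp)
      moreover have "(add zr (Suc n), v) \<in> r" using am add_Suc_left veq by (simp add: n_def)
      ultimately have "(add zr (Suc m), v) \<in> r" using trans by blast
      then have "G.rk (add zr (Suc m)) (insert x F)" using G.rk_mono rkx by blast
      moreover have "\<not> G.rk (add zr (Suc m)) (insert x F)"
      proof (rule UB_nonchain[OF finx _ uwG uw _ Hm])
        show "insert x F \<subseteq> {t. valid r i t}" using xv(1) Fs pre_sub_valid[OF vt] by blast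
        show "card (CA u w - insert x F) = m" by (simp add: m_def)
      qed
      ultimately show False by blast
    qed
  qed
qed

lemma UB_empty: "\<not> G.rk (nx i) {}"
proof
  assume rk: "G.rk (nx i) {}"
  have "\<forall>S. \<exists>x. realizes {t. valid r i t} Edge {} S x \<and> G.rk i (insert x {})"
    using iffD1[OF G.rk_succ[OF iab iF] rk] by blast
  then obtain x where x: "realizes {t. valid r i t} Edge {} (\<lambda>_. False) x"
    and rkx: "G.rk i {x}" by blast
  then have xv: "valid r i x" by (auto simp: realizes_def)
  have ne: "x \<noteq> []" using valid_ne[OF xv] .
  define v where "v = add (label x) (length x - card {x})"
  have "length x - card {x} < length x" using ne by simp
  then have vi: "(v, i) \<in> r" "v \<noteq> i" using add_label_lt_i[OF xv] v_def by auto
  then have "(nx v, i) \<in> r" using nx_le by blast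
  then have "G.rk (nx v) {x}" using G.rk_mono rkx by blast
  moreover have "\<not> G.rk (nx v) {x}"
    using UB_chain[OF xv _ _ v_def] pre_self[OF ne] by blast
  ultimately show False by blast
qed

end

lemma valid_same:
  assumes "valid r i t" "length t' = length t"
    "\<And>j. j < length t \<Longrightarrow> lab (t'!j) = lab (t!j) \<and> length (cod (t'!j)) = length (cod (t!j))"
  shows "valid r i t'"
  using assms unfolding valid_def by (metis Suc_lessD length_0_conv)

lemma prefix_eq_len: "prefix x y \<Longrightarrow> length x = length y \<Longrightarrow> x = y"
  by (auto simp: prefix_def)

lemma valid_snoc:
  assumes v: "valid r i t" and l: "(l, label t) \<in> r" "l \<noteq> label t" "(l, i) \<in> r" "l \<noteq> i" "underS r l \<noteq> {}"
    and c: "length c = length t"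
  shows "valid r i (t @ [(q, l, c)])"
proof -
  have ne: "t \<noteq> []" using v by (simp add: valid_def)
  have A: "\<forall>j<length (t @ [(q, l, c)]). (lab ((t @ [(q, l, c)]) ! j), i) \<in> r \<and> lab ((t @ [(q, l, c)]) ! j) \<noteq> i \<and>
        underS r (lab ((t @ [(q, l, c)]) ! j)) \<noteq> {} \<and> length (cod ((t @ [(q, l, c)]) ! j)) = j"
  proof (intro allI impI)
    fix j assume j: "j < length (t @ [(q, l, c)])"
    show "(lab ((t @ [(q, l, c)]) ! j), i) \<in> r \<and> lab ((t @ [(q, l, c)]) ! j) \<noteq> i \<and>
        underS r (lab ((t @ [(q, l, c)]) ! j)) \<noteq> {} \<and> length (cod ((t @ [(q, l, c)]) ! j)) = j"
    proof (cases "j < length t")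
      case True then show ?thesis using v unfolding valid_def by (simp add: nth_append)
    next
      case False then have "j = length t" using j by simp
      then show ?thesis using l c by (simp add: nth_append lab_def cod_def)
    qed
  qed
  have B: "\<forall>j. Suc j < length (t @ [(q, l, c)]) \<longrightarrow> (lab ((t @ [(q, l, c)]) ! Suc j), lab ((t @ [(q, l, c)]) ! j)) \<in> r \<and>
        lab ((t @ [(q, l, c)]) ! Suc j) \<noteq> lab ((t @ [(q, l, c)]) ! j)"
  proof (intro allI impI)
    fix j assume j: "Suc j < length (t @ [(q, l, c)])"
    show "(lab ((t @ [(q, l, c)]) ! Suc j), lab ((t @ [(q, l, c)]) ! j)) \<in> r \<and>
        lab ((t @ [(q, l, c)]) ! Suc j) \<noteq> lab ((t @ [(q, l, c)]) ! j)"
    proof (cases "Suc j < length t")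
      case True then show ?thesis using v unfolding valid_def by (simp add: nth_append)
    next
      case False then have sj: "Suc j = length t" using j by simp
      have "length t - 1 = j" using sj by simp
      then have "label t = lab (t ! j)" using ne by (simp add: label_def last_conv_nth)
      then show ?thesis using l sj by (simp add: nth_append lab_def)
    qed
  qed
  show ?thesis unfolding valid_def using A B by simp
qed

lemma valid_single: "(l, i) \<in> r \<Longrightarrow> l \<noteq> i \<Longrightarrow> underS r l \<noteq> {} \<Longrightarrow> valid r i [(q, l, [])]"
  unfolding valid_def by (auto simp: lab_def cod_def less_Suc_eq)

definition mkcode :: "(node \<Rightarrow> bool) \<Rightarrow> node \<Rightarrow> bool list" where
  "mkcode S t = map (\<lambda>k. S (take (Suc k) t)) [0..<length t]"

lemma mkcode_len[simp]: "length (mkcode S t) = length t" by (simp add: mkcode_def)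

lemma child_edge:
  assumes "y \<in> pre t"
  shows "Edge (t @ [(q, l, mkcode S t)]) y = S y"
proof -
  have y: "y \<noteq> []" "prefix y t" using assms by (auto simp: pre_def)
  have ly: "length y \<le> length t" "length y \<ge> 1" using y prefix_length_le by (auto simp: Suc_le_eq)
  have yt: "y = take (length y) t" using y(2) by (metis append_eq_conv_conj prefix_def)
  have sp: "strict_prefix y (t @ [(q, l, mkcode S t)])"
    using y(2) ly by (auto simp: strict_prefix_def prefix_def)
  have "Edge (t @ [(q, l, mkcode S t)]) y = mkcode S t ! (length y - 1)"
    using sp by (simp add: Edge_def cod_def)
  also have "\<dots> = S (take (length y) t)"
  proof -
    have "length y - 1 < length t" "Suc (length y - 1) = length y" using ly by auto
    then show ?thesis by (simp add: mkcode_def)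
  qed
  also have "\<dots> = S y" using yt by simp
  finally show ?thesis .
qed

lemma child_notin: "t @ [e] \<notin> pre t"
  by (auto simp: pre_def dest: prefix_length_le)

lemma sib_edge:
  assumes "y \<in> pre (s @ [(q, l, cc)])"
  shows "Edge (s @ [(if S (s @ [(q, l, cc)]) then q - 1 else q + 1, l, mkcode S s)]) y = S y"
proof -
  let ?t = "s @ [(q, l, cc)]"
  let ?q' = "if S ?t then q - 1 else q + 1"
  let ?t' = "s @ [(?q', l, mkcode S s)]"
  have "y = ?t \<or> y \<in> pre s" using assms pre_snoc by blast
  then show ?thesis
  proof
    assume yt: "y = ?t"
    have ne: "(?q', l, mkcode S s) \<noteq> (q, l, cc)" by auto
    have "\<not> prefix ?t' ?t" "\<not> prefix ?t ?t'"
      using ne prefix_eq_len[of ?t' ?t] prefix_eq_len[of ?t ?t'] by auto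
    then have par: "?t' \<parallel> ?t" by (auto simp: parallel_def)
    have "Edge ?t' ?t = (?t' < ?t)" using E_par[OF par] .
    also have "\<dots> = ((?q', l, mkcode S s) < (q, l, cc))" using lex_branch[OF ne, of s "[]" "[]"] by simp
    also have "\<dots> = S ?t" by (auto simp: less_prod_def)
    finally show ?thesis using yt by simp
  next
    assume "y \<in> pre s"
    then show ?thesis using child_edge by blast
  qed
qed

lemma sib_notin:
  assumes "t' = s @ [e']" "t = s @ [e]" "e' \<noteq> e"
  shows "t' \<notin> pre t"
  using assms prefix_eq_len[of t' t] by (auto simp: pre_def)

context TR begin

lemma in_age_pre: "valid r i t \<Longrightarrow> in_age {t. valid r i t} (pre t)"
  using pre_finite pre_valid by (auto simp: in_age_def)

lemma zr_lt_nx: "(zr, nx zr) \<in> r \<and> zr \<noteq> nx zr"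
proof -
  have "(zr, i) \<in> r" using zr_le[OF iF] .
  then show ?thesis using nx_gt[OF ab_le] by blast
qed

lemma LB_chain: "valid r i t \<Longrightarrow> (j, label t) \<in> r \<Longrightarrow> G.rk j (pre t)"
proof (induction j arbitrary: t rule: wf_induct[OF wf])
  case (1 j t)
  note vt = "1.prems"(1) and jl = "1.prems"(2)
  have IH: "G.rk y (pre t')" if "(y, j) \<in> r - Id" "valid r i t'" "(y, label t') \<in> r" for y t'
    using "1.IH"[rule_format, OF that] .
  have A: "in_age {t. valid r i t} (pre t)" using in_age_pre[OF vt] .
  have lt: "(label t, i) \<in> r" "label t \<noteq> i" "underS r (label t) \<noteq> {}" using label_lt_i[OF vt] by auto
  have ne: "t \<noteq> []" using valid_ne[OF vt] .
  show ?case
  proof (cases j rule: cases_j)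
    case zero
    then show ?thesis using iffD2[OF G.rk_zero[OF zero] A] by blast
  next
    case (succ p)
    have pj: "(p, j) \<in> r" "p \<noteq> j" using succ(1) by (auto simp: underS_def)
    have plt: "(p, label t) \<in> r \<and> p \<noteq> label t" using le_lt_lt[OF pj jl] by blast
    have pF: "p \<in> Field r" using succ(5) .
    have pi: "(p, i) \<in> r" "p \<noteq> i" using lt_le_lt[OF _ lt(1) lt(2)] plt trans[OF _ lt(1)] by blast+
    have "\<forall>S. \<exists>w. realizes {t. valid r i t} Edge (pre t) S w \<and> G.rk p (insert w (pre t))"
    proof
      fix S
      show "\<exists>w. realizes {t. valid r i t} Edge (pre t) S w \<and> G.rk p (insert w (pre t))"
      proof (cases "p = zr")
        case True
        have rk0: "G.rk p G'" if "in_age {t. valid r i t} G'" for G'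
          using iffD2[OF G.rk_zero] that underS_zr True by blast
        show ?thesis
        proof (cases "nx zr = label t")
          case False
          let ?c = "t @ [(0, nx zr, mkcode S t)]"
          have "(zr, label t) \<in> r" "zr \<noteq> label t" using True plt by auto
          then have l1: "(nx zr, label t) \<in> r" using nx_le by blast
          have l2: "(nx zr, i) \<in> r" "nx zr \<noteq> i" using lt_le_lt[OF l1 lt(1) lt(2)] trans[OF l1 lt(1)] by blast+
          have l3: "underS r (nx zr) \<noteq> {}" using zr_lt_nx by (auto simp: underS_def)
          have vc: "valid r i ?c" using valid_snoc[OF vt l1 False l2 l3] by simp
          have "realizes {t. valid r i t} Edge (pre t) S ?c"
            unfolding realizes_def using vc child_notin child_edge by blast
          moreover have "in_age {t. valid r i t} (insert ?c (pre t))" using A vc by (auto simp: in_age_def)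
          ultimately show ?thesis using rk0 by blast
        next
          case True2: True
          obtain s q l cc where teq: "t = s @ [(q, l, cc)]"
            using ne by (metis append_butlast_last_id prod_cases3)
          let ?q' = "if S (s @ [(q, l, cc)]) then q - 1 else q + 1"
          let ?t' = "s @ [(?q', l, mkcode S s)]"
          have lcc: "length cc = length s" using vnth(4)[OF vt, of "length s"] teq by (simp add: cod_def)
          have vt': "valid r i ?t'"
          proof (rule valid_same[OF vt])
            show "length ?t' = length t" using teq by simp
            fix j assume "j < length t"
            then show "lab (?t' ! j) = lab (t ! j) \<and> length (cod (?t' ! j)) = length (cod (t ! j))"
              using teq lcc by (cases "j < length s") (auto simp: nth_append lab_def cod_def)
          qed
          have "?t' \<notin> pre t" using sib_notin[of ?t' s _ t "(q, l, cc)"] teq by auto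
          moreover have "\<forall>y\<in>pre t. Edge ?t' y = S y" using sib_edge teq by blast
          ultimately have "realizes {t. valid r i t} Edge (pre t) S ?t'"
            unfolding realizes_def using vt' by blast
          moreover have "in_age {t. valid r i t} (insert ?t' (pre t))" using A vt' by (auto simp: in_age_def)
          ultimately show ?thesis using rk0 by blast
        qed
      next
        case False
        let ?c = "t @ [(0, p, mkcode S t)]"
        have l3: "underS r p \<noteq> {}" using zr_le[OF pF] False by (auto simp: underS_def)
        have vc: "valid r i ?c" using valid_snoc[OF vt _ _ pi l3] plt by simp
        have "realizes {t. valid r i t} Edge (pre t) S ?c"
          unfolding realizes_def using vc child_notin child_edge by blast
        moreover have "insert ?c (pre t) = pre ?c" using pre_snoc by simp
        moreover have "G.rk p (pre ?c)"
        proof (rule IH)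
          show "(p, j) \<in> r - Id" using pj by blast
          show "valid r i ?c" using vc .
          show "(p, label ?c) \<in> r" using refl[OF pF] by (simp add: label_def lab_def)
        qed
        ultimately show ?thesis by auto
      qed
    qed
    then have "G.rk (nx p) (pre t)" using iffD2[OF G.rk_succ[OF succ(4,5)]] A by blast
    then show ?thesis using succ(3) by simp
  next
    case limit
    have "\<forall>k\<in>underS r j. G.rk k (pre t)"
    proof
      fix k assume k: "k \<in> underS r j"
      show "G.rk k (pre t)"
      proof (rule IH[OF _ vt])
        show "(k, j) \<in> r - Id" using k by (auto simp: underS_def)
        show "(k, label t) \<in> r" using k jl trans by (auto simp: underS_def)
      qed
    qed
    then show ?thesis using iffD2[OF G.rk_limit[OF limit]] A by blast
  qed
qed

lemma LB_empty:
  assumes zi: "zr \<noteq> i" and nzi: "nx zr \<noteq> i"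
  shows "(j, i) \<in> r \<Longrightarrow> G.rk j {}"
proof (induction j rule: wf_induct[OF wf])
  case (1 j)
  note ji = "1.prems"(1)
  have IH: "G.rk y {}" if "(y, j) \<in> r - Id" "(y, i) \<in> r" for y
    using "1.IH"[rule_format, OF that] .
  have A: "in_age {t. valid r i t} {}" by (simp add: in_age_def)
  show ?case
  proof (cases j rule: cases_j)
    case zero
    then show ?thesis using iffD2[OF G.rk_zero[OF zero] A] by blast
  next
    case (succ p)
    have pj: "(p, j) \<in> r" "p \<noteq> j" using succ(1) by (auto simp: underS_def)
    have pi: "(p, i) \<in> r \<and> p \<noteq> i" using le_lt_lt[OF pj ji] by blast
    have pF: "p \<in> Field r" using succ(5) .
    have "\<forall>S. \<exists>w. realizes {t. valid r i t} Edge {} S w \<and> G.rk p (insert w {})"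
    proof
      fix S
      show "\<exists>w. realizes {t. valid r i t} Edge {} S w \<and> G.rk p (insert w {})"
      proof (cases "p = zr")
        case True
        let ?w = "[(0::int, nx zr, []::bool list)]"
        have "(zr, i) \<in> r" using zr_le[OF iF] .
        then have l1: "(nx zr, i) \<in> r" using nx_le zi by blast
        have l3: "underS r (nx zr) \<noteq> {}" using zr_lt_nx by (auto simp: underS_def)
        have vw: "valid r i ?w" using valid_single[OF l1 nzi l3] .
        have "realizes {t. valid r i t} Edge {} S ?w" using vw by (simp add: realizes_def)
        moreover have "G.rk p (insert ?w {})"
          using iffD2[OF G.rk_zero] underS_zr True vw by (auto simp: in_age_def)
        ultimately show ?thesis by blast
      next
        case False
        let ?w = "[(0::int, p, []::bool list)]"
        have l3: "underS r p \<noteq> {}" using zr_le[OF pF] False by (auto simp: underS_def)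
        have vw: "valid r i ?w" using valid_single l3 pi by blast
        have "realizes {t. valid r i t} Edge {} S ?w" using vw by (simp add: realizes_def)
        moreover have "G.rk p (pre ?w)"
          using LB_chain[OF vw] refl[OF pF] by (simp add: label_def lab_def)
        moreover have "pre ?w = insert ?w {}" using pre_snoc[of "[]"] by (simp add: pre_def)
        ultimately show ?thesis by auto
      qed
    qed
    then have "G.rk (nx p) {}" using iffD2[OF G.rk_succ[OF succ(4,5)]] A by blast
    then show ?thesis using succ(3) by simp
  next
    case limit
    have "\<forall>k\<in>underS r j. G.rk k {}"
    proof
      fix k assume k: "k \<in> underS r j"
      show "G.rk k {}" by (rule IH) (use k ji trans in \<open>auto simp: underS_def\<close>)
    qed
    then show ?thesis using iffD2[OF G.rk_limit[OF limit]] A by blast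
  qed
qed

theorem main_tree:
  assumes "zr \<noteq> i" "nx zr \<noteq> i"
  shows "rank_eq r {t. valid r i t} Edge i"
  unfolding rank_eq_def
proof
  show "rk_ge r {t. valid r i t} Edge i {}" using LB_empty[OF assms refl[OF iF]] .
  show "\<not> rk_ge r {t. valid r i t} Edge (wo_succ r i) {}" using UB_empty by (simp add: nx_def)
qed

end

lemma tourn_transfer:
  assumes T: "tournament V E" and inj: "inj_on f V"
    and EE: "\<And>x y. x \<in> V \<Longrightarrow> y \<in> V \<Longrightarrow> E' (f x) (f y) = E x y"
  shows "tournament (f ` V) E'"
  unfolding tournament_def
proof (intro conjI ballI impI)
  fix v assume "v \<in> f ` V"
  then obtain x where x: "x \<in> V" "v = f x" by blast
  then show "\<not> E' v v" using EE[OF x(1) x(1)] tourD1[OF T x(1)] by simp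
next
  fix u v assume "u \<in> f ` V" "v \<in> f ` V" "u \<noteq> v"
  then obtain x y where xy: "x \<in> V" "y \<in> V" "u = f x" "v = f y" by blast
  then have "x \<noteq> y" using \<open>u \<noteq> v\<close> by blast
  then show "E' u v = (\<not> E' v u)" using EE xy tourD2[OF T xy(1,2)] by simp
qed

lemma rk_transfer:
  assumes WO: "Well_order r" and T: "tournament V E" and inj: "inj_on f V"
    and EE: "\<And>x y. x \<in> V \<Longrightarrow> y \<in> V \<Longrightarrow> E' (f x) (f y) = E x y"
  shows "F \<subseteq> V \<Longrightarrow> rk_ge r (f ` V) E' j (f ` F) \<longleftrightarrow> rk_ge r V E j F"
proof -
  interpret A: RK r V E by unfold_locales (rule WO, rule T)
  interpret B: RK r "f ` V" E' by unfold_locales (rule WO, rule tourn_transfer[OF T inj EE])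
  have age: "in_age (f ` V) (f ` F) \<longleftrightarrow> in_age V F" if "F \<subseteq> V" for F
    using that inj_on_subset[OF inj that] finite_image_iff by (auto simp: in_age_def)
  have real1: "realizes (f ` V) E' (f ` F) S' (f w)" if FV: "F \<subseteq> V" and R: "realizes V E F (\<lambda>x. S' (f x)) w" for F S' w
  proof -
    have w: "w \<in> V" "w \<notin> F" "\<forall>x\<in>F. E w x = S' (f x)" using R by (auto simp: realizes_def)
    have "f w \<notin> f ` F" using w inj FV by (auto dest: inj_onD)
    moreover have "\<forall>x'\<in>f ` F. E' (f w) x' = S' x'" using w EE FV by auto
    ultimately show ?thesis using w by (simp add: realizes_def)
  qed
  have real2: "\<exists>w. w' = f w \<and> realizes V E F S w" if FV: "F \<subseteq> V" and R: "realizes (f ` V) E' (f ` F) (\<lambda>x. S (inv_into V f x)) w'" for F S w'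
  proof -
    obtain w where w: "w \<in> V" "w' = f w" using R by (auto simp: realizes_def)
    have "f w \<notin> f ` F" using R w by (simp add: realizes_def)
    then have "w \<notin> F" by blast
    moreover have "\<forall>x\<in>F. E w x = S x"
    proof
      fix x assume x: "x \<in> F"
      have "E' (f w) (f x) = S (inv_into V f (f x))" using R w x by (auto simp: realizes_def)
      moreover have "inv_into V f (f x) = x" using inv_into_f_f[OF inj] x FV by blast
      ultimately show "E w x = S x" using EE w(1) x FV by auto
    qed
    ultimately show ?thesis using w by (auto simp: realizes_def)
  qed
  show "F \<subseteq> V \<Longrightarrow> rk_ge r (f ` V) E' j (f ` F) \<longleftrightarrow> rk_ge r V E j F"
  proof (induction j arbitrary: F rule: wf_induct[OF A.wf])
    case (1 j F)
    have IH: "B.rk y (f ` G) \<longleftrightarrow> A.rk y G" if "(y, j) \<in> r - Id" "G \<subseteq> V" for y G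
      using "1.IH"[rule_format, OF that] .
    show ?case
    proof (cases j rule: A.cases_j)
      case zero
      show ?thesis using A.rk_zero[OF zero] B.rk_zero[OF zero] age[OF "1.prems"] by simp
    next
      case (succ p)
      have pj: "(p, j) \<in> r - Id" using succ(1) by (auto simp: underS_def)
      have "B.rk (A.nx p) (f ` F) \<longleftrightarrow> A.rk (A.nx p) F"
      proof
        assume b: "B.rk (A.nx p) (f ` F)"
        have ag: "in_age V F" using age[OF "1.prems"] B.rk_age[OF b] by simp
        have bs: "\<forall>S'. \<exists>w'. realizes (f ` V) E' (f ` F) S' w' \<and> B.rk p (insert w' (f ` F))"
          using iffD1[OF B.rk_succ[OF succ(4,5)] b] by simp
        have "\<forall>S. \<exists>w. realizes V E F S w \<and> A.rk p (insert w F)"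
        proof
          fix S
          obtain w' where w': "realizes (f ` V) E' (f ` F) (\<lambda>x. S (inv_into V f x)) w'"
            "B.rk p (insert w' (f ` F))" using bs by blast
          obtain w where w: "w' = f w" "realizes V E F S w" using real2[OF "1.prems" w'(1)] by blast
          have wV: "w \<in> V" using w(2) by (simp add: realizes_def)
          have "B.rk p (f ` insert w F)" using w'(2) w(1) by simp
          then have "A.rk p (insert w F)" using IH[OF pj] wV "1.prems" by blast
          then show "\<exists>w. realizes V E F S w \<and> A.rk p (insert w F)" using w(2) by blast
        qed
        then show "A.rk (A.nx p) F" using iffD2[OF A.rk_succ[OF succ(4,5)]] ag by blast
      next
        assume a: "A.rk (A.nx p) F"
        have ag: "in_age (f ` V) (f ` F)" using age[OF "1.prems"] A.rk_age[OF a] by simp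
        have as: "\<forall>S. \<exists>w. realizes V E F S w \<and> A.rk p (insert w F)"
          using iffD1[OF A.rk_succ[OF succ(4,5)] a] by blast
        have "\<forall>S'. \<exists>w'. realizes (f ` V) E' (f ` F) S' w' \<and> B.rk p (insert w' (f ` F))"
        proof
          fix S'
          obtain w where w: "realizes V E F (\<lambda>x. S' (f x)) w" "A.rk p (insert w F)" using as by blast
          have wV: "w \<in> V" using w(1) by (simp add: realizes_def)
          have "B.rk p (f ` insert w F)" using IH[OF pj] w(2) wV "1.prems" by blast
          then have "B.rk p (insert (f w) (f ` F))" by simp
          then show "\<exists>w'. realizes (f ` V) E' (f ` F) S' w' \<and> B.rk p (insert w' (f ` F))"
            using real1[OF "1.prems" w(1)] by blast
        qed
        then show "B.rk (A.nx p) (f ` F)"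
          using iffD2[OF B.rk_succ[OF succ(4,5)]] ag by simp
      qed
      then show ?thesis using succ(3) by simp
    next
      case limit
      have "(\<forall>k\<in>underS r j. B.rk k (f ` F)) \<longleftrightarrow> (\<forall>k\<in>underS r j. A.rk k F)"
        using IH "1.prems" by (auto simp: underS_def)
      then show ?thesis using A.rk_limit[OF limit] B.rk_limit[OF limit] age[OF "1.prems"] by simp
    qed
  qed
qed

theorem corollary5p14:
  fixes r :: "nat rel" and i :: nat
  assumes "Well_order r" and "i \<in> Field r" and "aboveS r i \<noteq> {}"
  shows "\<exists>(V :: nat set) E. countable V \<and> tournament V E \<and> rank_eq r V E i"
proof -
  interpret TR r i by unfold_locales (rule assms)+
  consider (z) "zr = i" | (o) "zr \<noteq> i" "nx zr = i" | (g) "zr \<noteq> i" "nx zr \<noteq> i" by blast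
  then show ?thesis
  proof cases
    case z
    let ?E = "\<lambda>(x::nat) (y::nat). False"
    have T: "tournament {} ?E" by (simp add: tournament_def)
    interpret A: RK r "{}::nat set" ?E by unfold_locales (rule T)
    have "A.rk i {}" using A.rk_zero underS_zr z by (simp add: in_age_def)
    moreover have "\<not> A.rk (nx i) {}"
    proof
      assume "A.rk (nx i) {}"
      then have "\<forall>S. \<exists>w. realizes {} ?E {} S w \<and> A.rk i (insert w {})"
        using iffD1[OF A.rk_succ[OF iab iF]] by blast
      then show False by (simp add: realizes_def)
    qed
    ultimately have "rank_eq r {} ?E i" by (simp add: rank_eq_def nx_def)
    then show ?thesis using T by blast
  next
    case o
    let ?E = "\<lambda>(x::nat) (y::nat). False"
    have T: "tournament {0} ?E" by (simp add: tournament_def)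
    interpret A: RK r "{0}::nat set" ?E by unfold_locales (rule T)
    have zi: "(zr, i) \<in> r" using zr_le[OF iF] .
    have zab: "aboveS r zr \<noteq> {}" "zr \<in> Field r" using ab_le[OF zi] zrF by auto
    have "A.rk (nx zr) {}"
    proof (rule iffD2[OF A.rk_succ[OF zab]])
      have "A.rk zr {0}" using A.rk_zero[OF underS_zr] by (simp add: in_age_def)
      moreover have "realizes {0} ?E {} S 0" for S by (simp add: realizes_def)
      ultimately show "in_age {0} {} \<and> (\<forall>S. \<exists>w. realizes {0} ?E {} S w \<and> A.rk zr (insert w {}))"
        by (auto simp: in_age_def)
    qed
    then have "A.rk i {}" using o by simp
    moreover have "\<not> A.rk (nx i) {}"
    proof
      assume "A.rk (nx i) {}"
      then have "\<forall>S. \<exists>w. realizes {0} ?E {} S w \<and> A.rk i (insert w {})"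
        using iffD1[OF A.rk_succ[OF iab iF]] by blast
      then obtain w where w: "realizes {0} ?E {} (\<lambda>_. False) w" "A.rk i (insert w {})" by blast
      then have "w = 0" by (simp add: realizes_def)
      then have "A.rk (nx zr) {0}" using w(2) o by simp
      then have "\<forall>S. \<exists>w. realizes {0} ?E {0} S w \<and> A.rk zr (insert w {0})"
        using iffD1[OF A.rk_succ[OF zab]] by blast
      then show False by (auto simp: realizes_def)
    qed
    ultimately have "rank_eq r {0} ?E i" by (simp add: rank_eq_def nx_def)
    then show ?thesis using T by blast
  next
    case g
    let ?N = "{t. valid r i t}"
    let ?E = "\<lambda>m n. Edge (from_nat m) (from_nat n)"
    have inj: "inj_on to_nat ?N" using inj_to_nat by (rule inj_on_subset) simp
    have EE: "\<And>x y. x \<in> ?N \<Longrightarrow> y \<in> ?N \<Longrightarrow> ?E (to_nat x) (to_nat y) = Edge x y" by simp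
    have T: "tournament (to_nat ` ?N) ?E" by (rule tourn_transfer[OF G.T inj EE])
    have R: "rank_eq r ?N Edge i" by (rule main_tree[OF g])
    have "rank_eq r (to_nat ` ?N) ?E i"
      using R rk_transfer[OF assms(1) G.T inj EE, of "{}"] by (simp add: rank_eq_def)
    moreover have "countable (to_nat ` ?N)" by simp
    ultimately show ?thesis using T by blast
  qed
qed

end
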